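(* Let $K\subset\mathbb{R}^n$ be a closed convex set and $\sigma>0$. For any fixed constants $C_1,C_2>0$ define $\varepsilon^\dagger=\sup\{\varepsilon>0:\varepsilon^2/\sigma^2\le C_1\log M^{\mathrm{loc}}(C_2\varepsilon)\}$. Then $\varepsilon^*\asymp\varepsilon^\dagger$, where $\varepsilon^*=\sup\{\varepsilon:\varepsilon^2/\sigma^2\le\log M^{\mathrm{loc}}(\varepsilon)\}$.
   Context: $M(\eta,T)$ is the maximal cardinality of a subset of $T$ with pairwise Euclidean distances $>\eta$; $M^{\mathrm{loc}}(\varepsilon)=\sup_{\theta\in K}M(\varepsilon/c^*,B(\theta,\varepsilon)\cap K)$, where $B$ is the closed Euclidean ball and $c^*$ a fixed sufficiently large absolute constant. $\asymp$ hides constants depending only on $C_1,C_2$. *)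

theory Defs
  imports Complex_Main
begin

text \<open>Euclidean space R^n, represented dimension-explicitly (so that constants
  can be required to be independent of n): vectors are functions nat => real
  vanishing outside the first n coordinates.\<close>

definition Rn :: "nat \<Rightarrow> (nat \<Rightarrow> real) set" where
  "Rn n = {x. \<forall>i\<ge>n. x i = 0}"

definition edist :: "nat \<Rightarrow> (nat \<Rightarrow> real) \<Rightarrow> (nat \<Rightarrow> real) \<Rightarrow> real" where
  "edist n x y = sqrt (\<Sum>i<n. (x i - y i)^2)"

definition econvex :: "(nat \<Rightarrow> real) set \<Rightarrow> bool" where
  "econvex K \<longleftrightarrow> (\<forall>x\<in>K. \<forall>y\<in>K. \<forall>t::real. 0 \<le> t \<and> t \<le> 1 \<longrightarrow>
      (\<lambda>i. t * x i + (1 - t) * y i) \<in> K)"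

definition eclosed :: "nat \<Rightarrow> (nat \<Rightarrow> real) set \<Rightarrow> bool" where
  "eclosed n K \<longleftrightarrow> (\<forall>s x. (\<forall>k. s k \<in> K) \<and> x \<in> Rn n \<and>
      (\<lambda>k. edist n (s k) x) \<longlonglongrightarrow> 0 \<longrightarrow> x \<in> K)"

definition eball :: "nat \<Rightarrow> (nat \<Rightarrow> real) \<Rightarrow> real \<Rightarrow> (nat \<Rightarrow> real) set" where
  "eball n \<theta> r = {x \<in> Rn n. edist n \<theta> x \<le> r}"

definition pack :: "nat \<Rightarrow> real \<Rightarrow> (nat \<Rightarrow> real) set \<Rightarrow> real" where
  "pack n \<eta> T = Sup {real (card S) | S. S \<subseteq> T \<and> finite S \<and>
      (\<forall>x\<in>S. \<forall>y\<in>S. x \<noteq> y \<longrightarrow> edist n x y > \<eta>)}"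

text \<open>Local packing number M^loc(eps) with constant c (= c^*).\<close>
definition Mloc :: "nat \<Rightarrow> real \<Rightarrow> (nat \<Rightarrow> real) set \<Rightarrow> real \<Rightarrow> real" where
  "Mloc n c K \<epsilon> = (SUP \<theta>\<in>K. pack n (\<epsilon> / c) (eball n \<theta> \<epsilon> \<inter> K))"

definition sup0 :: "real set \<Rightarrow> real" where
  "sup0 S = (if S = {} then 0 else Sup S)"

definition eps_star :: "nat \<Rightarrow> real \<Rightarrow> (nat \<Rightarrow> real) set \<Rightarrow> real \<Rightarrow> real" where
  "eps_star n c K \<sigma> = sup0 {\<epsilon>. \<epsilon>^2 / \<sigma>^2 \<le> ln (Mloc n c K \<epsilon>)}"

definition eps_dagger :: "nat \<Rightarrow> real \<Rightarrow> (nat \<Rightarrow> real) set \<Rightarrow> real \<Rightarrow> real \<Rightarrow> real \<Rightarrow> real" where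
  "eps_dagger n c K \<sigma> C1 C2 =
     sup0 {\<epsilon>. \<epsilon> > 0 \<and> \<epsilon>^2 / \<sigma>^2 \<le> C1 * ln (Mloc n c K (C2 * \<epsilon>))}"

end

theory Submission
  imports Defs "HOL-Library.FuncSet"
begin

lemma edist_nonneg: "0 \<le> edist n x y"
  by (simp add: edist_def sum_nonneg)

lemma coord_le_edist:
  assumes "i < n" shows "\<bar>x i - y i\<bar> \<le> edist n x y"
proof -
  have "(x i - y i)^2 \<le> (\<Sum>j<n. (x j - y j)^2)"
    using assms by (intro member_le_sum) auto
  then have "sqrt ((x i - y i)^2) \<le> edist n x y"
    unfolding edist_def using real_sqrt_le_mono by blast
  then show ?thesis by simp
qed

lemma edist_sym: "edist n x y = edist n y x"
  unfolding edist_def by (simp add: power2_commute)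

lemma edist_lt:
  assumes "0 < n" "0 < h" "\<And>i. i < n \<Longrightarrow> \<bar>x i - y i\<bar> < h"
  shows "edist n x y < sqrt (real n) * h"
proof -
  have "(\<Sum>j<n. (x j - y j)^2) < (\<Sum>j<n. h^2)"
  proof (rule sum_strict_mono)
    fix j assume "j \<in> {..<n}"
    then have "\<bar>x j - y j\<bar> < h" using assms by auto
    then show "(x j - y j)^2 < h^2"
      by (metis abs_ge_zero abs_power2 power_strict_mono power2_abs zero_less_numeral)
  qed (use assms in auto)
  then have "edist n x y < sqrt (real n * h^2)"
    unfolding edist_def by (simp add: real_sqrt_less_mono)
  also have "\<dots> = sqrt (real n) * h" using assms by (simp add: real_sqrt_mult)
  finally show ?thesis .
qed

definition Nb :: "nat \<Rightarrow> real \<Rightarrow> real \<Rightarrow> real" where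
  "Nb n R \<eta> = (2 * R * sqrt (real n) / \<eta> + 2) ^ n"

lemma card_bound:
  assumes eta: "0 < \<eta>" and R: "0 \<le> R" and sub: "S \<subseteq> eball n \<theta> R" and fin: "finite S"
    and sep: "\<forall>x\<in>S. \<forall>y\<in>S. x \<noteq> y \<longrightarrow> edist n x y > \<eta>"
  shows "real (card S) \<le> Nb n R \<eta>"
proof (cases "n = 0")
  case True
  have "S \<subseteq> {\<lambda>_. 0}"
    using sub by (auto simp: eball_def Rn_def True)
  then have "card S \<le> card {\<lambda>_::nat. 0::real}" by (rule card_mono[rotated]) simp
  then have "card S \<le> 1" by simp
  then show ?thesis by (simp add: Nb_def True)
next
  case False
  then have n: "0 < n" by simp
  define h where "h = \<eta> / sqrt (real n)"
  have h: "0 < h" using eta n by (simp add: h_def)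
  define g where "g = (\<lambda>x::nat\<Rightarrow>real. restrict (\<lambda>i. \<lfloor>x i / h\<rfloor>) {..<n})"
  define I where "I = (\<lambda>i. {\<lfloor>(\<theta> i - R) / h\<rfloor>..\<lfloor>(\<theta> i + R) / h\<rfloor>})"
  have inj: "inj_on g S"
  proof (rule inj_onI, rule ccontr)
    fix x y assume xS: "x \<in> S" and yS: "y \<in> S" and eq: "g x = g y" and ne: "x \<noteq> y"
    have "\<bar>x i - y i\<bar> < h" if "i < n" for i
    proof -
      have fl: "\<lfloor>x i / h\<rfloor> = \<lfloor>y i / h\<rfloor>"
        using fun_cong[OF eq, of i] that by (simp add: g_def)
      have "\<bar>x i / h - y i / h\<bar> < 1"
        using fl by linarith
      then have "\<bar>(x i - y i) / h\<bar> < 1" by (simp add: diff_divide_distrib)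
      then have "\<bar>x i - y i\<bar> / \<bar>h\<bar> < 1" by (simp only: abs_divide)
      then have "\<bar>x i - y i\<bar> / h < 1" using h by simp
      then show ?thesis using h by (simp add: pos_divide_less_eq)
    qed
    then have "edist n x y < sqrt (real n) * h" using edist_lt[OF n h] by blast
    also have "\<dots> = \<eta>" using n by (simp add: h_def)
    finally show False using sep xS yS ne by force
  qed
  have img: "g ` S \<subseteq> PiE {..<n} I"
  proof
    fix z assume "z \<in> g ` S"
    then obtain x where xS: "x \<in> S" and z: "z = g x" by auto
    have "x i \<in> {\<theta> i - R .. \<theta> i + R}" if "i < n" for i
    proof -
      have "edist n \<theta> x \<le> R" using sub xS by (auto simp: eball_def)
      moreover have "\<bar>\<theta> i - x i\<bar> \<le> edist n \<theta> x" using coord_le_edist[OF that] .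
      ultimately show ?thesis by auto
    qed
    then have "\<lfloor>x i / h\<rfloor> \<in> I i" if "i < n" for i
      using that h unfolding I_def
      by (auto intro!: floor_mono divide_right_mono)
    then show "z \<in> PiE {..<n} I" by (auto simp: z g_def)
  qed
  have finI: "finite (PiE {..<n} I)" by (auto intro!: finite_PiE simp: I_def)
  have "card S = card (g ` S)" using inj by (simp add: card_image)
  also have "\<dots> \<le> card (PiE {..<n} I)" using img finI by (rule card_mono[rotated])
  also have "\<dots> = (\<Prod>i<n. card (I i))" by (simp add: card_PiE)
  finally have c1: "real (card S) \<le> (\<Prod>i<n. real (card (I i)))"
    by (metis of_nat_le_iff of_nat_prod)
  have cI: "real (card (I i)) \<le> 2 * R * sqrt (real n) / \<eta> + 2" for i
  proof -
    define u where "u = (\<theta> i + R) / h"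
    define l where "l = (\<theta> i - R) / h"
    have lu: "l \<le> u" using R h by (simp add: u_def l_def divide_right_mono)
    have fu: "real_of_int \<lfloor>u\<rfloor> \<le> u" by (rule of_int_floor_le)
    have fl: "l - 1 < real_of_int \<lfloor>l\<rfloor>" by (rule real_of_int_floor_gt_diff_one)
    have "real (card (I i)) = real (nat (\<lfloor>u\<rfloor> - \<lfloor>l\<rfloor> + 1))"
      by (simp add: I_def u_def l_def)
    also have "\<dots> \<le> u - l + 2"
    proof (cases "0 \<le> \<lfloor>u\<rfloor> - \<lfloor>l\<rfloor> + 1")
      case True
      then have "real (nat (\<lfloor>u\<rfloor> - \<lfloor>l\<rfloor> + 1)) = real_of_int (\<lfloor>u\<rfloor> - \<lfloor>l\<rfloor> + 1)"
        by (simp only: of_nat_nat)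
      also have "\<dots> = real_of_int \<lfloor>u\<rfloor> - real_of_int \<lfloor>l\<rfloor> + 1" by simp
      finally show ?thesis using fu fl by linarith
    next
      case False
      then have "nat (\<lfloor>u\<rfloor> - \<lfloor>l\<rfloor> + 1) = 0" by simp
      then show ?thesis using lu by simp
    qed
    also have "u - l + 2 = (\<theta> i + R) / h - (\<theta> i - R) / h + 2" by (simp add: u_def l_def)
    also have "(\<theta> i + R) / h - (\<theta> i - R) / h = 2 * R / h" using h by (simp add: field_simps)
    also have "2 * R / h = 2 * R * sqrt (real n) / \<eta>" using n eta by (simp add: h_def)
    finally show ?thesis .
  qed
  have "(\<Prod>i<n. real (card (I i))) \<le> (\<Prod>i<n. 2 * R * sqrt (real n) / \<eta> + 2)"
    by (rule prod_mono) (use cI in auto)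
  then show ?thesis using c1 by (simp add: Nb_def)
qed


definition PS :: "nat \<Rightarrow> real \<Rightarrow> (nat \<Rightarrow> real) set \<Rightarrow> real set" where
  "PS n \<eta> T = {real (card S) | S. S \<subseteq> T \<and> finite S \<and>
      (\<forall>x\<in>S. \<forall>y\<in>S. x \<noteq> y \<longrightarrow> edist n x y > \<eta>)}"

lemma pack_PS: "pack n \<eta> T = Sup (PS n \<eta> T)"
  by (simp add: pack_def PS_def)

lemma PS_ne: "PS n \<eta> T \<noteq> {}"
proof -
  have "0 \<in> PS n \<eta> T" unfolding PS_def by (auto intro!: exI[of _ "{}"])
  then show ?thesis by auto
qed

lemma PS_bdd:
  assumes "0 < \<eta>" "0 \<le> R" "T \<subseteq> eball n \<theta> R"
  shows "bdd_above (PS n \<eta> T)" "\<And>v. v \<in> PS n \<eta> T \<Longrightarrow> v \<le> Nb n R \<eta>"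
proof -
  show le: "v \<le> Nb n R \<eta>" if vP: "v \<in> PS n \<eta> T" for v
  proof -
    obtain S where v: "v = real (card S)" and S: "S \<subseteq> T" "finite S"
      and sep: "\<forall>x\<in>S. \<forall>y\<in>S. x \<noteq> y \<longrightarrow> edist n x y > \<eta>"
      using vP unfolding PS_def by blast
    have "S \<subseteq> eball n \<theta> R" using S(1) assms(3) by (rule subset_trans)
    then show ?thesis using card_bound[OF assms(1,2) _ S(2) sep] v by simp
  qed
  then show "bdd_above (PS n \<eta> T)" by (meson bdd_aboveI)
qed

lemma pack_le_Nb:
  assumes "0 < \<eta>" "0 \<le> R" "T \<subseteq> eball n \<theta> R"
  shows "pack n \<eta> T \<le> Nb n R \<eta>"
  unfolding pack_PS using PS_bdd[OF assms] PS_ne by (meson cSup_least)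

lemma card_le_pack:
  assumes "0 < \<eta>" "0 \<le> R" "T \<subseteq> eball n \<theta> R"
    and "S \<subseteq> T" "finite S" "\<forall>x\<in>S. \<forall>y\<in>S. x \<noteq> y \<longrightarrow> edist n x y > \<eta>"
  shows "real (card S) \<le> pack n \<eta> T"
  unfolding pack_PS
  by (rule cSup_upper[OF _ PS_bdd(1)[OF assms(1-3)]]) (use assms(4-6) in \<open>auto simp: PS_def\<close>)

lemma Mloc_bdd:
  assumes "0 < \<epsilon>" "0 < c"
  shows "bdd_above ((\<lambda>\<theta>. pack n (\<epsilon> / c) (eball n \<theta> \<epsilon> \<inter> K)) ` K)"
proof (rule bdd_aboveI)
  fix v assume "v \<in> (\<lambda>\<theta>. pack n (\<epsilon> / c) (eball n \<theta> \<epsilon> \<inter> K)) ` K"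
  then obtain \<theta> where "v = pack n (\<epsilon> / c) (eball n \<theta> \<epsilon> \<inter> K)" by auto
  then show "v \<le> Nb n \<epsilon> (\<epsilon> / c)"
    using pack_le_Nb[of "\<epsilon>/c" \<epsilon> "eball n \<theta> \<epsilon> \<inter> K" n \<theta>] assms by auto
qed

lemma edist_scale:
  "edist n (\<lambda>i. t * x i + (1 - t) * z i) (\<lambda>i. t * y i + (1 - t) * z i) = \<bar>t\<bar> * edist n x y"
proof -
  have "(\<Sum>i<n. ((t * x i + (1 - t) * z i) - (t * y i + (1 - t) * z i))^2) = t^2 * (\<Sum>i<n. (x i - y i)^2)"
  proof -
    have "(\<Sum>i<n. ((t * x i + (1 - t) * z i) - (t * y i + (1 - t) * z i))^2) = (\<Sum>i<n. t^2 * (x i - y i)^2)"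
      by (rule sum.cong) (auto simp: algebra_simps power2_eq_square)
    then show ?thesis by (simp add: sum_distrib_left)
  qed
  then show ?thesis unfolding edist_def by (simp add: real_sqrt_mult)
qed

lemma edist_scale0:
  "edist n z (\<lambda>i. t * x i + (1 - t) * z i) = \<bar>t\<bar> * edist n z x"
  using edist_scale[of n t z z x] by (simp add: algebra_simps)

lemma edist_self: "edist n x x = 0" by (simp add: edist_def)

lemma edist_zero: "x \<in> Rn n \<Longrightarrow> y \<in> Rn n \<Longrightarrow> edist n x y = 0 \<Longrightarrow> x = y"
proof (rule ext)
  fix i assume x: "x \<in> Rn n" and y: "y \<in> Rn n" and e: "edist n x y = 0"
  show "x i = y i"
  proof (cases "i < n")
    case True then show ?thesis using coord_le_edist[OF True, of x y] e by simp
  next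
    case False then show ?thesis using x y by (simp add: Rn_def)
  qed
qed

lemma Mloc_mono:
  assumes c: "0 < c" and e: "0 < \<epsilon>'" "\<epsilon>' \<le> \<epsilon>" and K: "K \<subseteq> Rn n" "K \<noteq> {}" "econvex K"
  shows "Mloc n c K \<epsilon> \<le> Mloc n c K \<epsilon>'"
  unfolding Mloc_def
proof (rule cSUP_least[OF K(2)])
  fix \<theta> assume th: "\<theta> \<in> K"
  define t where "t = \<epsilon>' / \<epsilon>"
  have t: "0 < t" "t \<le> 1" using e by (auto simp: t_def)
  define \<phi> where "\<phi> = (\<lambda>x::nat\<Rightarrow>real. \<lambda>i. t * x i + (1 - t) * \<theta> i)"
  show "pack n (\<epsilon> / c) (eball n \<theta> \<epsilon> \<inter> K) \<le> (SUP \<theta>\<in>K. pack n (\<epsilon>' / c) (eball n \<theta> \<epsilon>' \<inter> K))"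
    unfolding pack_PS[of n "\<epsilon> / c" "eball n \<theta> \<epsilon> \<inter> K"]
  proof (rule cSup_least[OF PS_ne])
    fix v assume "v \<in> PS n (\<epsilon> / c) (eball n \<theta> \<epsilon> \<inter> K)"
    then obtain S where v: "v = real (card S)" and S: "S \<subseteq> eball n \<theta> \<epsilon> \<inter> K" "finite S"
      and sep: "\<forall>x\<in>S. \<forall>y\<in>S. x \<noteq> y \<longrightarrow> edist n x y > \<epsilon> / c"
      unfolding PS_def by blast
    have inj: "inj_on \<phi> S"
    proof (rule inj_onI)
      fix x y assume eq: "\<phi> x = \<phi> y"
      have "t * x i = t * y i" for i
      proof -
        have "\<phi> x i = \<phi> y i" using eq by simp
        then show ?thesis by (simp add: \<phi>_def)
      qed
      then show "x = y" using t by (intro ext) simp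
    qed
    have sub: "\<phi> ` S \<subseteq> eball n \<theta> \<epsilon>' \<inter> K"
    proof
      fix z assume "z \<in> \<phi> ` S"
      then obtain x where xS: "x \<in> S" and z: "z = \<phi> x" by auto
      have xK: "x \<in> K" and xb: "edist n \<theta> x \<le> \<epsilon>" using S xS by (auto simp: eball_def)
      have "z \<in> K" using K(3) xK th t unfolding econvex_def z \<phi>_def by auto
      moreover have "edist n \<theta> z \<le> \<epsilon>'"
      proof -
        have "edist n \<theta> z = t * edist n \<theta> x" using edist_scale0[of n \<theta> t x] t by (simp add: z \<phi>_def)
        also have "\<dots> \<le> t * \<epsilon>" using xb t by (simp add: mult_left_mono)
        also have "\<dots> = \<epsilon>'" using e by (simp add: t_def)
        finally show ?thesis .
      qed
      ultimately show "z \<in> eball n \<theta> \<epsilon>' \<inter> K" using K(1) by (auto simp: eball_def)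
    qed
    have sep': "\<forall>x\<in>\<phi> ` S. \<forall>y\<in>\<phi> ` S. x \<noteq> y \<longrightarrow> edist n x y > \<epsilon>' / c"
    proof (intro ballI impI)
      fix a b assume "a \<in> \<phi> ` S" "b \<in> \<phi> ` S" "a \<noteq> b"
      then obtain x y where xy: "x \<in> S" "y \<in> S" "a = \<phi> x" "b = \<phi> y" "x \<noteq> y" by auto
      have "edist n a b = t * edist n x y" using edist_scale[of n t x \<theta> y] t by (simp add: xy \<phi>_def)
      also have "\<dots> > t * (\<epsilon> / c)" using sep xy t by (intro mult_strict_left_mono) auto
      also have "t * (\<epsilon> / c) = \<epsilon>' / c" using e by (simp add: t_def)
      finally show "edist n a b > \<epsilon>' / c" .
    qed
    have "v = real (card (\<phi> ` S))" using inj v by (simp add: card_image)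
    also have "\<dots> \<le> pack n (\<epsilon>' / c) (eball n \<theta> \<epsilon>' \<inter> K)"
      by (rule card_le_pack[of _ \<epsilon>' _ n \<theta>]) (use c e sub sep' S in auto)
    also have "\<dots> \<le> (SUP \<theta>\<in>K. pack n (\<epsilon>' / c) (eball n \<theta> \<epsilon>' \<inter> K))"
      by (rule cSUP_upper[OF th Mloc_bdd]) (use c e in auto)
    finally show "v \<le> (SUP \<theta>\<in>K. pack n (\<epsilon>' / c) (eball n \<theta> \<epsilon>' \<inter> K))" .
  qed
qed

lemma Mloc_ge1:
  assumes c: "0 < c" and e: "0 < \<epsilon>" and K: "K \<subseteq> Rn n" "K \<noteq> {}"
  shows "1 \<le> Mloc n c K \<epsilon>"
proof -
  obtain \<theta> where th: "\<theta> \<in> K" using K by auto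
  have "real (card {\<theta>}) \<le> pack n (\<epsilon> / c) (eball n \<theta> \<epsilon> \<inter> K)"
    by (rule card_le_pack[of _ \<epsilon> _ n \<theta>]) (use c e th K in \<open>auto simp: eball_def edist_self\<close>)
  also have "\<dots> \<le> Mloc n c K \<epsilon>" unfolding Mloc_def
    by (rule cSUP_upper[OF th Mloc_bdd]) (use c e in auto)
  finally show ?thesis by simp
qed

lemma Mloc_zero:
  assumes K: "K \<subseteq> Rn n" "K \<noteq> {}"
  shows "Mloc n c K 0 = 1"
proof -
  have "pack n (0 / c) (eball n \<theta> 0 \<inter> K) = 1" if th: "\<theta> \<in> K" for \<theta>
  proof -
    have T: "eball n \<theta> 0 \<inter> K = {\<theta>}"
    proof
      show "{\<theta>} \<subseteq> eball n \<theta> 0 \<inter> K" using th K by (auto simp: eball_def edist_self)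
      show "eball n \<theta> 0 \<inter> K \<subseteq> {\<theta>}"
      proof
        fix x assume x: "x \<in> eball n \<theta> 0 \<inter> K"
        then have "edist n \<theta> x = 0" using edist_nonneg[of n \<theta> x] by (auto simp: eball_def)
        then have "\<theta> = x" using edist_zero[of \<theta> n x] x th K by (auto simp: eball_def)
        then show "x \<in> {\<theta>}" by simp
      qed
    qed
    have "PS n 0 {\<theta>} = {0, 1}"
    proof
      show "PS n 0 {\<theta>} \<subseteq> {0, 1}" unfolding PS_def
        by (auto simp: subset_singleton_iff)
      have "real (card ({}::(nat\<Rightarrow>real) set)) \<in> PS n 0 {\<theta>}" unfolding PS_def by blast
      moreover have "real (card {\<theta>}) \<in> PS n 0 {\<theta>}" unfolding PS_def by blast
      ultimately show "{0, 1} \<subseteq> PS n 0 {\<theta>}" by simp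
    qed
    moreover have "Sup {0, 1::real} = 1" by (rule cSup_eq_maximum) auto
    ultimately show ?thesis unfolding pack_PS T by simp
  qed
  then show ?thesis unfolding Mloc_def using K(2)
    by (simp cong: SUP_cong)
qed


lemma abstract_main:
  fixes f :: "real \<Rightarrow> real" and \<sigma> C1 C2 :: real
  assumes sg: "0 < \<sigma>" and C1: "0 < C1" and C2: "0 < C2"
    and F1: "\<And>e. 0 < e \<Longrightarrow> 0 \<le> f e"
    and F2: "\<And>e e'. 0 < e' \<Longrightarrow> e' \<le> e \<Longrightarrow> f e \<le> f e'"
    and F3: "f 0 = 0"
  defines "k \<equiv> C1 * C2^2"
  defines "A \<equiv> {\<epsilon>. \<epsilon>^2 / \<sigma>^2 \<le> f \<epsilon>}"
  defines "D \<equiv> {\<epsilon>. \<epsilon> > 0 \<and> \<epsilon>^2 / \<sigma>^2 \<le> C1 * f (C2 * \<epsilon>)}"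
  shows "(C2 / max 1 (sqrt k)) * sup0 D \<le> sup0 A \<and> sup0 A \<le> (C2 / min 1 (sqrt k)) * sup0 D"
proof -
  define s where "s = C2 / max 1 (sqrt k)"
  define t where "t = min 1 (sqrt k) / C2"
  have k: "0 < k" using C1 C2 by (simp add: k_def)
  have s: "0 < s" using C2 by (simp add: s_def)
  have t: "0 < t" using C2 k by (simp add: t_def)
  have s2: "\<sigma>^2 > 0" using sg by simp
  have A_iff: "\<epsilon> \<in> A \<longleftrightarrow> \<epsilon>^2 \<le> \<sigma>^2 * f \<epsilon>" for \<epsilon>
    unfolding A_def using s2 by (simp add: pos_divide_le_eq mult.commute)
  have D_iff: "\<epsilon> \<in> D \<longleftrightarrow> \<epsilon> > 0 \<and> (C2 * \<epsilon>)^2 \<le> k * \<sigma>^2 * f (C2 * \<epsilon>)" for \<epsilon>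
  proof -
    have "\<epsilon>^2 / \<sigma>^2 \<le> C1 * f (C2 * \<epsilon>) \<longleftrightarrow> \<epsilon>^2 \<le> \<sigma>^2 * (C1 * f (C2 * \<epsilon>))"
      using s2 by (simp add: pos_divide_le_eq mult.commute)
    also have "\<dots> \<longleftrightarrow> C2^2 * \<epsilon>^2 \<le> C2^2 * (\<sigma>^2 * (C1 * f (C2 * \<epsilon>)))"
      using C2 by simp
    also have "\<dots> \<longleftrightarrow> (C2 * \<epsilon>)^2 \<le> k * \<sigma>^2 * f (C2 * \<epsilon>)"
      by (simp add: k_def power_mult_distrib algebra_simps)
    finally show ?thesis unfolding D_def by simp
  qed
  have A0: "0 \<in> A" using F3 by (simp add: A_iff)
  define B where "B = max 1 (\<sigma>^2 * f 1)"
  have Abd: "\<epsilon> \<le> B" if "\<epsilon> \<in> A" for \<epsilon>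
  proof (cases "\<epsilon> \<le> 1")
    case True then show ?thesis by (simp add: B_def)
  next
    case False
    have "\<epsilon> \<le> \<epsilon>^2" using False by (simp add: power2_eq_square)
    also have "\<dots> \<le> \<sigma>^2 * f \<epsilon>" using that A_iff by simp
    also have "\<dots> \<le> \<sigma>^2 * f 1" using F2[of 1 \<epsilon>] False s2 by simp
    finally show ?thesis by (simp add: B_def)
  qed
  have bddA: "bdd_above A" using Abd by (meson bdd_aboveI)
  have DA: "s * \<epsilon> \<in> A" if "\<epsilon> \<in> D" for \<epsilon>
  proof -
    define d where "d = C2 * \<epsilon>"
    have d: "0 < d" "d^2 \<le> k * \<sigma>^2 * f d" using that D_iff C2 by (auto simp: d_def)
    show ?thesis
    proof (cases "k \<le> 1")
      case True
      then have sv: "s * \<epsilon> = d" by (simp add: s_def d_def)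
      have "d^2 \<le> k * \<sigma>^2 * f d" by (rule d(2))
      also have "\<dots> \<le> 1 * \<sigma>^2 * f d"
        using True F1[OF d(1)] s2 by (intro mult_right_mono) auto
      finally show ?thesis using sv A_iff by simp
    next
      case False
      then have sk: "1 < sqrt k" by simp
      then have sv: "s * \<epsilon> = d / sqrt k" by (simp add: s_def d_def)
      have "(d / sqrt k)^2 = d^2 / k" using k by (simp add: power_divide)
      also have "\<dots> \<le> \<sigma>^2 * f d" using d(2) k by (simp add: divide_le_eq mult.commute mult.left_commute)
      also have "\<dots> \<le> \<sigma>^2 * f (d / sqrt k)"
        using F2[of "d / sqrt k" d] sk d(1) s2 by (simp add: divide_le_eq)
      finally show ?thesis using sv A_iff by simp
    qed
  qed
  have AD: "t * \<epsilon> \<in> D" if "\<epsilon> \<in> A" "0 < \<epsilon>" for \<epsilon>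
  proof -
    have e: "\<epsilon>^2 \<le> \<sigma>^2 * f \<epsilon>" using that A_iff by simp
    have fe: "0 \<le> f \<epsilon>" using F1 that by simp
    show ?thesis
    proof (cases "1 \<le> k")
      case True
      then have tv: "C2 * (t * \<epsilon>) = \<epsilon>" using C2 by (simp add: t_def)
      have "\<epsilon>^2 \<le> 1 * \<sigma>^2 * f \<epsilon>" using e by simp
      also have "\<dots> \<le> k * \<sigma>^2 * f \<epsilon>" using True fe s2 by (intro mult_right_mono) auto
      finally have h: "(C2 * (t * \<epsilon>))^2 \<le> k * \<sigma>^2 * f (C2 * (t * \<epsilon>))" unfolding tv .
      have "0 < t * \<epsilon>" using t that by simp
      then show ?thesis using D_iff[of "t * \<epsilon>"] h by blast
    next
      case False
      then have sk: "sqrt k < 1" by simp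
      then have tv: "C2 * (t * \<epsilon>) = sqrt k * \<epsilon>" using C2 by (simp add: t_def)
      have "(sqrt k * \<epsilon>)^2 = k * \<epsilon>^2" using k by (simp add: power_mult_distrib)
      also have "\<dots> \<le> k * (\<sigma>^2 * f \<epsilon>)" using e k by simp
      also have "\<dots> \<le> k * (\<sigma>^2 * f (sqrt k * \<epsilon>))"
        using F2[of "sqrt k * \<epsilon>" \<epsilon>] sk k that s2 by (simp add: mult_le_cancel_right1)
      finally have h: "(C2 * (t * \<epsilon>))^2 \<le> k * \<sigma>^2 * f (C2 * (t * \<epsilon>))" unfolding tv by (simp add: mult.assoc)
      have "0 < t * \<epsilon>" using t that by simp
      then show ?thesis using D_iff[of "t * \<epsilon>"] h by blast
    qed
  qed
  have sA: "sup0 A = Sup A" using A0 by (auto simp: sup0_def)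
  have Ssup: "0 \<le> Sup A" using cSup_upper[OF A0 bddA] .
  have part1: "s * sup0 D \<le> sup0 A"
  proof (cases "D = {}")
    case True then show ?thesis using Ssup sA by (simp add: sup0_def)
  next
    case False
    have "Sup D \<le> Sup A / s"
    proof (rule cSup_least[OF False])
      fix x assume "x \<in> D"
      then have "s * x \<le> Sup A" using DA cSup_upper bddA by blast
      then show "x \<le> Sup A / s" using s by (simp add: le_divide_eq mult.commute)
    qed
    then show ?thesis using False sA s by (simp add: sup0_def le_divide_eq mult.commute)
  qed
  have part2: "sup0 A \<le> (1 / t) * sup0 D"
  proof -
    have "Sup A \<le> (1 / t) * sup0 D"
    proof (rule cSup_least)
      show "A \<noteq> {}" using A0 by auto
    next
      fix x assume xA: "x \<in> A"
      show "x \<le> (1 / t) * sup0 D"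
      proof (cases "0 < x")
        case True
        have tD: "t * x \<in> D" using AD xA True by simp
        have bddD: "bdd_above D"
        proof (rule bdd_aboveI)
          fix y assume "y \<in> D"
          then have "s * y \<le> B" using DA Abd by blast
          then show "y \<le> B / s" using s by (simp add: le_divide_eq mult.commute)
        qed
        have "t * x \<le> Sup D" using cSup_upper[OF tD bddD] .
        then have "t * x \<le> sup0 D" using tD by (auto simp: sup0_def)
        then show ?thesis using t by (simp add: divide_le_eq le_divide_eq mult.commute)
      next
        case False
        have "0 \<le> sup0 D"
        proof (cases "D = {}")
          case True then show ?thesis by (simp add: sup0_def)
        next
          case ne: False
          then obtain y where yD: "y \<in> D" by auto
          have bddD: "bdd_above D"
          proof (rule bdd_aboveI)
            fix y assume "y \<in> D"
            then have "s * y \<le> B" using DA Abd by blast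
            then show "y \<le> B / s" using s by (simp add: le_divide_eq mult.commute)
          qed
          have "y \<le> Sup D" using cSup_upper[OF yD bddD] .
          moreover have "0 < y" using yD by (simp add: D_def)
          ultimately show ?thesis using ne by (simp add: sup0_def)
        qed
        then show ?thesis using False t by (smt (verit) divide_nonneg_nonneg mult_nonneg_nonneg)
      qed
    qed
    then show ?thesis using sA by simp
  qed
  have "1 / t = C2 / min 1 (sqrt k)" by (simp add: t_def)
  then show ?thesis using part1 part2 unfolding s_def by simp
qed

theorem mainTheorem15:
  shows "\<exists>c0>0. \<forall>c\<ge>c0. \<forall>C1>0. \<forall>C2>0. \<exists>a>0. \<exists>b>0.
    \<forall>(n::nat) (K::(nat \<Rightarrow> real) set) (\<sigma>::real).
      K \<subseteq> Rn n \<and> K \<noteq> {} \<and> econvex K \<and> eclosed n K \<and> \<sigma> > 0 \<longrightarrow>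
      a * eps_dagger n c K \<sigma> C1 C2 \<le> eps_star n c K \<sigma> \<and>
      eps_star n c K \<sigma> \<le> b * eps_dagger n c K \<sigma> C1 C2"
proof (rule exI[of _ "1::real"], rule conjI[OF zero_less_one], intro allI impI)
  fix c C1 C2 :: real
  assume c1: "1 \<le> c" and C1: "0 < C1" and C2: "0 < C2"
  have c: "0 < c" using c1 by simp
  define k where "k = C1 * C2^2"
  have k: "0 < k" using C1 C2 by (simp add: k_def)
  have pa: "0 < C2 / max 1 (sqrt k)" using C2 by simp
  have pb: "0 < C2 / min 1 (sqrt k)" using C2 k by simp
  have "\<forall>n K \<sigma>. K \<subseteq> Rn n \<and> K \<noteq> {} \<and> econvex K \<and> eclosed n K \<and> 0 < \<sigma> \<longrightarrow>
      C2 / max 1 (sqrt k) * eps_dagger n c K \<sigma> C1 C2 \<le> eps_star n c K \<sigma> \<and>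
      eps_star n c K \<sigma> \<le> C2 / min 1 (sqrt k) * eps_dagger n c K \<sigma> C1 C2"
  proof (intro allI impI conjI)
    fix n K and \<sigma> :: real
    assume H: "K \<subseteq> Rn n \<and> K \<noteq> {} \<and> econvex K \<and> eclosed n K \<and> 0 < \<sigma>"
    define f where "f = (\<lambda>e. ln (Mloc n c K e))"
    have F1: "0 \<le> f e" if "0 < e" for e
      using Mloc_ge1[OF c that, of K n] H by (simp add: f_def)
    have F2: "f e \<le> f e'" if "0 < e'" "e' \<le> e" for e e'
    proof -
      have "Mloc n c K e \<le> Mloc n c K e'" using Mloc_mono[OF c that, of K n] H by simp
      moreover have "1 \<le> Mloc n c K e" using Mloc_ge1[OF c, of e K n] H that by simp
      ultimately show ?thesis by (simp add: f_def)
    qed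
    have F3: "f 0 = 0" using Mloc_zero[of K n c] H by (simp add: f_def)
    have sg: "0 < \<sigma>" using H by simp
    have main: "(C2 / max 1 (sqrt (C1 * C2^2))) * sup0 {\<epsilon>. \<epsilon> > 0 \<and> \<epsilon>^2 / \<sigma>^2 \<le> C1 * f (C2 * \<epsilon>)}
            \<le> sup0 {\<epsilon>. \<epsilon>^2 / \<sigma>^2 \<le> f \<epsilon>} \<and>
          sup0 {\<epsilon>. \<epsilon>^2 / \<sigma>^2 \<le> f \<epsilon>}
            \<le> (C2 / min 1 (sqrt (C1 * C2^2))) * sup0 {\<epsilon>. \<epsilon> > 0 \<and> \<epsilon>^2 / \<sigma>^2 \<le> C1 * f (C2 * \<epsilon>)}"
      by (rule abstract_main[of \<sigma> C1 C2 f, OF sg C1 C2 F1 F2 F3])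
    have eq1: "eps_star n c K \<sigma> = sup0 {\<epsilon>. \<epsilon>^2 / \<sigma>^2 \<le> f \<epsilon>}"
      unfolding eps_star_def f_def by (rule refl)
    have eq2: "eps_dagger n c K \<sigma> C1 C2 = sup0 {\<epsilon>. \<epsilon> > 0 \<and> \<epsilon>^2 / \<sigma>^2 \<le> C1 * f (C2 * \<epsilon>)}"
      unfolding eps_dagger_def f_def by (rule refl)
    show "C2 / max 1 (sqrt k) * eps_dagger n c K \<sigma> C1 C2 \<le> eps_star n c K \<sigma>"
      using main unfolding eq1 eq2 k_def by (rule conjunct1)
    show "eps_star n c K \<sigma> \<le> C2 / min 1 (sqrt k) * eps_dagger n c K \<sigma> C1 C2"
      using main unfolding eq1 eq2 k_def by (rule conjunct2)
  qed
  then show "\<exists>a>0. \<exists>b>0. \<forall>n K \<sigma>. K \<subseteq> Rn n \<and> K \<noteq> {} \<and> econvex K \<and> eclosed n K \<and> 0 < \<sigma> \<longrightarrow>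
      a * eps_dagger n c K \<sigma> C1 C2 \<le> eps_star n c K \<sigma> \<and>
      eps_star n c K \<sigma> \<le> b * eps_dagger n c K \<sigma> C1 C2"
    using pa pb by blast
qed

end
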